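(* For $x\in\mathbb{C}\setminus\{1,2,3,\dots\}$ define $y_0(x)=\sum_{k=1}^{\infty}\prod_{j=1}^{k}\frac{1}{x-j}$. Then $y_0$ is a meromorphic solution of $y(x+1)=\frac{1}{x}y(x)+\frac{1}{x}$, with simple poles at the positive integers, $\operatorname{Res}(y_0;x=n)=e^{-1}/\Gamma(n)$ for $n\in\mathbb{N}$, $n\ge1$, and it has the Mittag-Leffler decomposition $$y_0(x)=e^{-1}\sum_{k=1}^{\infty}\frac{1}{(x-k)\,\Gamma(k)}.$$ Moreover, for $\arg x\neq 0$, $y_0(x)$ is asymptotic as $|x|\to\infty$ to the formal power series solution $\tilde y$ of the equation.
   Context: $\tilde y$ denotes the (unique) formal power series solution in powers of $1/x$ of the difference equation $y(x+1)=\frac{1}{x}y(x)+\frac{1}{x}$. *)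

theory Defs
  imports "HOL-Complex_Analysis.Complex_Analysis" "HOL-Computational_Algebra.Formal_Power_Series"
begin

definition pos_ints :: "complex set" where
  "pos_ints = of_nat ` {1..}"

definition y0 :: "complex \<Rightarrow> complex" where
  "y0 x = (\<Sum>k. \<Prod>j\<in>{1..Suc k}. 1 / (x - of_nat j))"

text \<open>The formal power series solution in powers of t = 1/x of
  y(x+1) = y(x)/x + 1/x.  Since 1/(x+1) = t/(1+t), the equation reads
  Y(t/(1+t)) = t * (Y(t) + 1); the coefficient of t^n is the coefficient of x^(-n).\<close>
definition ytilde :: "complex fps" where
  "ytilde = (THE Y. fps_compose Y (fps_X / (1 + fps_X)) = fps_X * (Y + 1))"

end

theory Submission
  imports Defs
begin


definition GG :: "complex fps" where "GG = fps_X / (1 + fps_X)"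

lemma GG_alt: "GG = fps_X * inverse (1 + fps_X)"
  unfolding GG_def by (rule fps_divide_unit) simp

lemma GG_0: "fps_nth GG 0 = 0"
  by (simp add: GG_alt)

lemma GG_1: "fps_nth GG (Suc 0) = 1"
  by (simp add: GG_alt)

lemma GG_eq: "GG * (1 + fps_X) = fps_X"
proof -
  have "inverse (1 + fps_X) * (1 + fps_X) = (1::complex fps)"
    by (rule inverse_mult_eq_1) simp
  then show ?thesis by (simp add: GG_alt mult.assoc)
qed

lemma inv_eqI:
  fixes A B C D :: "complex fps"
  assumes "fps_nth B 0 \<noteq> 0" "fps_nth D 0 \<noteq> 0" "A * D = C * B"
  shows "A * inverse B = C * inverse D"
proof -
  have 1: "inverse B * B = 1" "inverse D * D = 1" using assms by auto
  have "A * inverse B = A * (inverse D * D) * inverse B" using 1 by simp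
  also have "\<dots> = (A * D) * inverse B * inverse D" by (simp add: mult_ac)
  also have "\<dots> = C * (inverse B * B) * inverse D" using assms(3) by (simp add: mult_ac)
  also have "\<dots> = C * inverse D" using 1 by simp
  finally show ?thesis .
qed

lemma ring_aux:
  fixes g x c :: "'a::comm_ring_1"
  assumes e: "g * x = x - g"
  shows "g * (1 - c * x) = x * (1 - (c + 1) * g)"
proof -
  have "g * (1 - c * x) = g - c * (g * x)" by (simp add: algebra_simps)
  also have "\<dots> = g - c * (x - g)" by (simp add: e)
  finally have 1: "g * (1 - c * x) = g - c * (x - g)" .
  have "x * (1 - (c + 1) * g) = x - c * (g * x) - g * x" by (simp add: algebra_simps)
  also have "\<dots> = x - c * (x - g) - (x - g)" by (simp add: e)
  finally have 2: "x * (1 - (c + 1) * g) = x - c * (x - g) - (x - g)" .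
  show ?thesis unfolding 1 2 by (simp add: algebra_simps)
qed

lemma key_GG:
  "GG * inverse (1 - fps_const (of_nat (Suc c)) * GG) =
   fps_X * inverse (1 - fps_const (of_nat c) * fps_X)"
proof (rule inv_eqI)
  have "fps_nth (1 - fps_const (of_nat (Suc c)) * GG) 0 = 1" unfolding fps_sub_nth fps_mult_nth_0 GG_0 by simp
  then show "fps_nth (1 - fps_const (of_nat (Suc c)) * GG) 0 \<noteq> 0" by (metis one_neq_zero)
  have "fps_nth (1 - fps_const (of_nat c :: complex) * fps_X) 0 = 1" unfolding fps_sub_nth fps_mult_nth_0 by simp
  then show "fps_nth (1 - fps_const (of_nat c :: complex) * fps_X) 0 \<noteq> 0" by (metis one_neq_zero)
  have e: "GG * fps_X = fps_X - GG" using GG_eq by (simp add: algebra_simps)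
  have s: "fps_const (of_nat (Suc c) :: complex) = fps_const (of_nat c) + 1"
    by (metis add.commute fps_const_add fps_const_1_eq_1 of_nat_Suc)
  show "GG * (1 - fps_const (of_nat c) * fps_X) = fps_X * (1 - fps_const (of_nat (Suc c)) * GG)"
    unfolding s by (rule ring_aux[OF e])
qed

primrec QQ :: "nat \<Rightarrow> complex fps" where
  "QQ 0 = 1"
| "QQ (Suc k) = fps_X * (QQ k * inverse (1 - fps_const (of_nat (Suc k)) * fps_X))"

lemma QQ_rec: "QQ (Suc k) * (1 - fps_const (of_nat (Suc k)) * fps_X) = fps_X * QQ k"
proof -
  have "inverse (1 - fps_const (of_nat (Suc k)) * fps_X) * (1 - fps_const (of_nat (Suc k)) * fps_X) = (1::complex fps)"
    by (rule inverse_mult_eq_1) simp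
  then show ?thesis by (simp add: mult.assoc)
qed

lemma QQ_low: "n < k \<Longrightarrow> fps_nth (QQ k) n = 0"
proof (induction k arbitrary: n)
  case 0 then show ?case by simp
next
  case (Suc k)
  show ?case
  proof (cases n)
    case 0 then show ?thesis by simp
  next
    case (Suc m)
    have "fps_nth (QQ k * inverse (1 - fps_const (of_nat (Suc k)) * fps_X)) m = 0"
      unfolding fps_mult_nth using Suc.IH Suc.prems Suc by (intro sum.neutral) auto
    then show ?thesis using Suc by simp
  qed
qed

lemma compose_lin: "(1 - fps_const c * fps_X) oo GG = 1 - fps_const c * GG"
  by (simp add: fps_compose_sub_distrib fps_const_mult_apply_left[symmetric] GG_0)

lemma QQ_comp: "QQ (Suc k) oo GG = fps_X * QQ k"
proof (induction k)
  case 0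
  have "QQ (Suc 0) oo GG = GG * inverse (1 - fps_const (of_nat (Suc 0)) * GG)"
    by (simp add: fps_compose_mult_distrib GG_0 fps_inverse_compose compose_lin[of 1, simplified])
  also have "\<dots> = fps_X" using key_GG[of 0] by simp
  finally show ?case by simp
next
  case (Suc k)
  have "QQ (Suc (Suc k)) oo GG = GG * ((QQ (Suc k) oo GG) * inverse (1 - fps_const (of_nat (Suc (Suc k))) * GG))"
    by (simp only: QQ.simps fps_compose_mult_distrib GG_0 fps_inverse_compose compose_lin
        fps_X_fps_compose_startby0) (simp add: fps_inverse_compose compose_lin GG_0)
  also have "\<dots> = fps_X * QQ k * (GG * inverse (1 - fps_const (of_nat (Suc (Suc k))) * GG))"
    using Suc by (simp add: mult_ac)
  also have "\<dots> = fps_X * QQ k * (fps_X * inverse (1 - fps_const (of_nat (Suc k)) * fps_X))"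
    by (simp only: key_GG)
  also have "\<dots> = fps_X * QQ (Suc k)" by (simp add: mult_ac)
  finally show ?case .
qed

definition YY :: "complex fps" where
  "YY = Abs_fps (\<lambda>n. \<Sum>k\<in>{1..n}. fps_nth (QQ k) n)"

lemma YY_nth_ext: "n \<le> N \<Longrightarrow> fps_nth YY n = (\<Sum>k\<in>{1..N}. fps_nth (QQ k) n)"
  unfolding YY_def by (auto intro!: sum.mono_neutral_left QQ_low)

lemma YY_eq: "YY oo GG = fps_X * (YY + 1)"
proof (rule fps_ext)
  fix n
  have "fps_nth (YY oo GG) n = (\<Sum>i = 0..n. (\<Sum>k\<in>{1..n}. fps_nth (QQ k) i) * fps_nth (GG ^ i) n)"
    unfolding fps_compose_nth by (intro sum.cong refl) (simp add: YY_nth_ext)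
  also have "\<dots> = (\<Sum>k\<in>{1..n}. fps_nth (QQ k oo GG) n)"
    unfolding fps_compose_nth sum_distrib_right by (rule sum.swap)
  also have "\<dots> = (\<Sum>k\<in>{1..n}. fps_nth (fps_X * QQ (k - 1)) n)"
  proof (intro sum.cong refl)
    fix k assume "k \<in> {1..n}"
    then have kk: "k = Suc (k - 1)" by auto
    have "QQ k oo GG = fps_X * QQ (k - 1)" by (subst kk) (rule QQ_comp)
    then show "fps_nth (QQ k oo GG) n = fps_nth (fps_X * QQ (k - 1)) n" by (rule arg_cong)
  qed
  also have "\<dots> = fps_nth (fps_X * (YY + 1)) n"
  proof (cases n)
    case 0 then show ?thesis by simp
  next
    case (Suc m)
    have "(\<Sum>k\<in>{1..Suc m}. fps_nth (fps_X * QQ (k - 1)) (Suc m)) = (\<Sum>k\<in>{1..Suc m}. fps_nth (QQ (k - 1)) m)"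
      by (intro sum.cong refl) (simp only: fps_X_mult_nth if_False diff_Suc_1 nat.distinct)
    also have "\<dots> = (\<Sum>k\<le>m. fps_nth (QQ k) m)"
      by (rule sum.reindex_bij_witness[of _ Suc "\<lambda>k. k - 1"]) auto
    also have "\<dots> = fps_nth (QQ 0) m + (\<Sum>k\<in>{1..m}. fps_nth (QQ k) m)"
      by (simp add: atMost_atLeast0 sum.atLeast_Suc_atMost)
    also have "\<dots> = fps_nth 1 m + fps_nth YY m"
      by (simp add: YY_def)
    also have "\<dots> = fps_nth (fps_X * (YY + 1)) (Suc m)"
      by simp
    finally show ?thesis unfolding Suc .
  qed
  finally show "fps_nth (YY oo GG) n = fps_nth (fps_X * (YY + 1)) n" .
qed

lemma uniq:
  assumes A: "A oo GG = fps_X * (A + 1)" and B: "B oo GG = fps_X * (B + 1)"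
  shows "A = B"
proof -
  define D where "D = A - B"
  have DD: "D oo GG = fps_X * D"
    unfolding D_def fps_compose_sub_distrib A B by (simp add: algebra_simps)
  have "fps_nth D n = 0" for n
  proof (induction n rule: less_induct)
    case (less n)
    have "fps_nth (D oo GG) n = (\<Sum>i = 0..n. fps_nth D i * fps_nth (GG ^ i) n)"
      by (rule fps_compose_nth)
    also have "\<dots> = (\<Sum>i\<in>{n}. fps_nth D i * fps_nth (GG ^ i) n)"
      using less by (intro sum.mono_neutral_right) auto
    also have "\<dots> = fps_nth D n" by (simp add: startsby_zero_power_nth_same GG_0 GG_1)
    finally have "fps_nth D n = fps_nth (fps_X * D) n" using DD by simp
    also have "\<dots> = 0" using less by simp
    finally show ?case .
  qed
  then show ?thesis unfolding D_def by (metis eq_iff_diff_eq_0 fps_ext fps_zero_nth)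
qed

lemma ytilde_eq: "ytilde = YY"
  unfolding ytilde_def GG_def[symmetric]
  by (rule the_equality) (use YY_eq uniq in auto)



definition PP :: "nat \<Rightarrow> complex \<Rightarrow> complex" where
  "PP k x = (\<Prod>j\<in>{1..k}. 1 / (x - of_nat j))"

definition cc :: "nat \<Rightarrow> nat \<Rightarrow> complex" where
  "cc k m = (-1) ^ (k - m) / (fact m * fact (k - m))"

lemma cc_sum: "(\<Sum>m\<le>Suc k. cc (Suc k) m) = 0"
proof -
  define K where "K = Suc k"
  have "(\<Sum>m\<le>K. cc K m) = (\<Sum>m\<le>K. of_nat (K choose m) * 1 ^ m * (-1) ^ (K - m)) / fact K"
    unfolding sum_divide_distrib
    by (intro sum.cong refl) (simp add: cc_def binomial_fact field_simps)
  also have "(\<Sum>m\<le>K. of_nat (K choose m) * 1 ^ m * (-1) ^ (K - m)) = (1 + (-1::complex)) ^ K"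
    by (rule binomial_ring[symmetric])
  also have "\<dots> = 0" by (simp add: K_def)
  finally show ?thesis by (simp add: K_def)
qed

lemma cc_step: "m \<le> k \<Longrightarrow> cc (Suc k) m = - cc k m / of_nat (Suc k - m)"
  by (simp add: cc_def Suc_diff_le field_simps)

lemma pos_ints_iff: "x \<in> pos_ints \<longleftrightarrow> (\<exists>j::nat. j \<ge> 1 \<and> x = of_nat j)"
  by (auto simp: pos_ints_def)

lemma Suc_pos_ints: "(of_nat (Suc m) :: complex) \<in> pos_ints"
  unfolding pos_ints_def by (rule imageI) simp

lemma not_pos_ints: "x \<notin> pos_ints \<Longrightarrow> x \<noteq> of_nat (Suc m)"
  using Suc_pos_ints[of m] by auto

lemma pf2:
  fixes a b x c :: complex
  assumes "x \<noteq> a" "x \<noteq> b" "b - a \<noteq> 0"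
  shows "c / ((x - a) * (x - b)) = (- c / (b - a)) / (x - a) - (- c / (b - a)) / (x - b)"
proof -
  have g0: "c / (u * v) = (- c / w) / u - (- c / w) / v"
    if "w = u - v" "w \<noteq> 0" "u \<noteq> 0" "v \<noteq> 0" for u v w :: complex
  proof -
    have "(- c / w) / u - (- c / w) / v = (c * (u - v)) / (w * (u * v))"
      using that(2-4) by (simp add: field_simps)
    also have "\<dots> = c / (u * v)" using that by simp
    finally show ?thesis by simp
  qed
  have g: "c / (u * v) = (- c / (u - v)) / u - (- c / (u - v)) / v"
    if "u \<noteq> 0" "v \<noteq> 0" "u - v \<noteq> 0" for u v :: complex
    using g0[OF refl that(3,1,2)] .
  have 1: "x - a \<noteq> 0" "x - b \<noteq> 0" using assms by auto
  have 2: "(x - a) - (x - b) = b - a" by simp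
  show ?thesis using g[OF 1 ] assms(3) unfolding 2 by simp
qed

lemma pf: "x \<notin> pos_ints \<Longrightarrow> PP (Suc k) x = (\<Sum>m\<le>k. cc k m / (x - of_nat (Suc m)))"
proof (induction k)
  case 0 then show ?case by (simp add: PP_def cc_def)
next
  case (Suc k)
  have nz: "x - of_nat (Suc m) \<noteq> 0" for m using not_pos_ints[OF Suc.prems, of m] by simp
  have "PP (Suc (Suc k)) x = PP (Suc k) x * (1 / (x - of_nat (Suc (Suc k))))"
    unfolding PP_def by (simp add: prod.cl_ivl_Suc)
  also have "\<dots> = (\<Sum>m\<le>k. cc k m / ((x - of_nat (Suc m)) * (x - of_nat (Suc (Suc k)))))"
    unfolding Suc.IH[OF Suc.prems] by (simp add: sum_divide_distrib divide_divide_eq_left del: of_nat_Suc)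
  also have "\<dots> = (\<Sum>m\<le>k. cc (Suc k) m / (x - of_nat (Suc m)) - cc (Suc k) m / (x - of_nat (Suc (Suc k))))"
  proof (intro sum.cong refl)
    fix m assume "m \<in> {..k}"
    then have mk: "m \<le> k" by simp
    have d: "of_nat (Suc k - m) = (of_nat (Suc (Suc k)) - of_nat (Suc m) :: complex)"
      using mk by (simp add: of_nat_diff)
    have d0: "(of_nat (Suc k - m) :: complex) \<noteq> 0" using mk by (metis of_nat_eq_0_iff Suc_diff_le nat.distinct(1))
    show "cc k m / ((x - of_nat (Suc m)) * (x - of_nat (Suc (Suc k)))) =
          cc (Suc k) m / (x - of_nat (Suc m)) - cc (Suc k) m / (x - of_nat (Suc (Suc k)))"
      unfolding cc_step[OF mk] d
      by (rule pf2) (use nz[of m] nz[of "Suc k"] d0 d in auto)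
  qed
  also have "\<dots> = (\<Sum>m\<le>k. cc (Suc k) m / (x - of_nat (Suc m))) - (\<Sum>m\<le>k. cc (Suc k) m) / (x - of_nat (Suc (Suc k)))"
    by (simp add: sum_subtractf sum_divide_distrib)
  also have "(\<Sum>m\<le>k. cc (Suc k) m) = - cc (Suc k) (Suc k)"
    using cc_sum[of k] by (simp add: eq_neg_iff_add_eq_0)
  also have "(\<Sum>m\<le>k. cc (Suc k) m / (x - of_nat (Suc m))) - - cc (Suc k) (Suc k) / (x - of_nat (Suc (Suc k)))
      = (\<Sum>m\<le>Suc k. cc (Suc k) m / (x - of_nat (Suc m)))"
    by simp
  finally show ?case .
qed



lemma norm_nat_diff: "norm (of_nat a - of_nat b :: complex) = \<bar>real a - real b\<bar>"
  by (metis norm_of_real of_real_diff of_real_of_nat_eq)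

lemma nat_close_eq: "norm (of_nat a - of_nat b :: complex) < 1 \<Longrightarrow> a = b"
  unfolding norm_nat_diff by linarith

lemma pos_dist:
  fixes x :: complex
  assumes "\<forall>j\<in>K. x \<noteq> of_nat j"
  shows "\<exists>r>0. \<forall>j\<in>K. r \<le> norm (x - of_nat j)"
proof -
  define F where "F = {j\<in>K. real j \<le> norm x + 1}"
  have "F \<subseteq> {..nat \<lfloor>norm x + 1\<rfloor>}"
  proof
    fix j assume "j \<in> F"
    then have "real j \<le> norm x + 1" by (simp add: F_def)
    then have "int j \<le> \<lfloor>norm x + 1\<rfloor>" by (simp only: le_floor_iff of_int_of_nat_eq)
    then show "j \<in> {..nat \<lfloor>norm x + 1\<rfloor>}" by simp
  qed
  then have fin: "finite F" by (rule finite_subset) simp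
  define r where "r = Min (insert 1 ((\<lambda>j. norm (x - of_nat j)) ` F))"
  have "r \<in> insert 1 ((\<lambda>j. norm (x - of_nat j)) ` F)"
    unfolding r_def using fin by (intro Min_in) auto
  then have rpos: "r > 0" using assms by (auto simp: F_def)
  have "r \<le> norm (x - of_nat j)" if "j \<in> K" for j
  proof (cases "j \<in> F")
    case True then show ?thesis unfolding r_def using fin by (intro Min_le) auto
  next
    case False
    then have "real j > norm x + 1" using that by (auto simp: F_def)
    moreover have "norm (of_nat j :: complex) - norm x \<le> norm (x - of_nat j)"
      by (metis norm_minus_commute norm_triangle_ineq2)
    moreover have "r \<le> 1" unfolding r_def using fin by (intro Min_le) auto
    ultimately show ?thesis by simp
  qed
  with rpos show ?thesis by blast
qed

definition tA :: "nat set \<Rightarrow> complex \<Rightarrow> nat \<Rightarrow> complex" where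
  "tA A x m = (if m \<in> A then 0 else 1 / (fact m * (x - of_nat (Suc m))))"

definition gA :: "nat set \<Rightarrow> complex \<Rightarrow> complex" where
  "gA A x = (\<Sum>m. tA A x m)"

definition polesA :: "nat set \<Rightarrow> complex set" where
  "polesA A = (\<lambda>m. of_nat (Suc m)) ` (- A)"

lemma summable_inv_fact: "summable (\<lambda>m. 1 / fact m :: real)"
  using summable_exp[of "1::real"] by (simp add: inverse_eq_divide)

lemma tA_bound:
  assumes "\<forall>m. m \<notin> A \<longrightarrow> r \<le> norm (y - of_nat (Suc m))" "r > 0"
  shows "norm (tA A y m) \<le> (1 / r) * (1 / fact m)"
proof (cases "m \<in> A")
  case True then show ?thesis using assms by (simp add: tA_def)
next
  case False
  then have r: "r \<le> norm (y - of_nat (Suc m))" using assms by auto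
  have "norm (tA A y m) = 1 / (fact m * norm (y - of_nat (Suc m)))"
    using False by (simp add: tA_def norm_divide norm_mult)
  also have "\<dots> \<le> 1 / (fact m * r)"
    using r assms(2) by (intro divide_left_mono mult_left_mono mult_pos_pos) auto
  finally show ?thesis by (simp add: mult.commute)
qed

lemma dist_from_poles:
  assumes "x \<notin> polesA A"
  shows "\<exists>r>0. \<forall>m. m \<notin> A \<longrightarrow> r \<le> norm (x - of_nat (Suc m))"
proof -
  have "\<forall>j\<in>Suc ` (-A). x \<noteq> of_nat j" using assms by (auto simp: polesA_def)
  from pos_dist[OF this] obtain r where "r > 0" "\<forall>j\<in>Suc ` (-A). r \<le> norm (x - of_nat j)" by blast
  then show ?thesis by auto
qed

lemma summable_tA:
  assumes "x \<notin> polesA A"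
  shows "summable (\<lambda>m. norm (tA A x m))"
proof -
  obtain r where r: "r > 0" "\<forall>m. m \<notin> A \<longrightarrow> r \<le> norm (x - of_nat (Suc m))"
    using dist_from_poles[OF assms] by blast
  show ?thesis
    by (rule summable_comparison_test'[OF summable_mult[OF summable_inv_fact, of "1/r"]])
       (use tA_bound[OF r(2) r(1)] in auto)
qed

lemma closed_polesA: "closed (polesA A)"
  by (rule discrete_imp_closed[of 1]) (auto simp: polesA_def dist_norm dest: nat_close_eq)

lemma gA_holo: "gA A holomorphic_on (- polesA A)"
proof (rule holomorphic_uniform_sequence[where f = "\<lambda>n x. \<Sum>i<n. tA A x i"])
  show "open (- polesA A)" using closed_polesA by auto
  show "(\<lambda>x. \<Sum>i<n. tA A x i) holomorphic_on - polesA A" for n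
  proof (intro holomorphic_on_sum)
    fix i assume "i \<in> {..<n}"
    show "(\<lambda>x. tA A x i) holomorphic_on - polesA A"
    proof (cases "i \<in> A")
      case True then show ?thesis by (simp add: tA_def)
    next
      case False
      then have "x - of_nat (Suc i) \<noteq> 0" if "x \<in> - polesA A" for x
        using that by (auto simp: polesA_def)
      then show ?thesis using False unfolding tA_def by (auto intro!: holomorphic_intros)
    qed
  qed
  fix x assume x: "x \<in> - polesA A"
  obtain r where r: "r > 0" "\<forall>m. m \<notin> A \<longrightarrow> r \<le> norm (x - of_nat (Suc m))"
    using dist_from_poles x by blast
  define d where "d = r / 2"
  have d: "d > 0" using r by (simp add: d_def)
  have far: "\<forall>m. m \<notin> A \<longrightarrow> d \<le> norm (y - of_nat (Suc m))" if "y \<in> cball x d" for y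
  proof (intro allI impI)
    fix m assume "m \<notin> A"
    then have "r \<le> norm (x - of_nat (Suc m))" using r by auto
    moreover have "norm (x - of_nat (Suc m)) \<le> norm (x - y) + norm (y - of_nat (Suc m))"
      by (metis norm_triangle_ineq diff_add_cancel add_diff_eq)
    moreover have "norm (x - y) \<le> d" using that by (simp add: dist_norm)
    ultimately show "d \<le> norm (y - of_nat (Suc m))" by (simp add: d_def)
  qed
  have "cball x d \<subseteq> - polesA A"
  proof
    fix y assume y: "y \<in> cball x d"
    show "y \<in> - polesA A"
    proof
      assume "y \<in> polesA A"
      then obtain m where "m \<notin> A" "y = of_nat (Suc m)" by (auto simp: polesA_def)
      with far[OF y] d show False by auto
    qed
  qed
  moreover have "uniform_limit (cball x d) (\<lambda>n x. \<Sum>i<n. tA A x i) (gA A) sequentially"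
    unfolding gA_def
    by (rule Weierstrass_m_test[OF _ summable_mult[OF summable_inv_fact, of "1/d"]])
       (use tA_bound far d in auto)
  ultimately show "\<exists>d>0. cball x d \<subseteq> - polesA A \<and> uniform_limit (cball x d) (\<lambda>n x. \<Sum>i<n. tA A x i) (gA A) sequentially"
    using d by blast
qed

lemma polesA_empty: "polesA {} = pos_ints"
proof -
  have s: "Suc ` UNIV = {1::nat..}"
  proof (rule set_eqI)
    fix x :: nat
    show "x \<in> Suc ` UNIV \<longleftrightarrow> x \<in> {1..}"
    proof
      assume "x \<in> {1..}" then have "x = Suc (x - 1)" by simp
      then show "x \<in> Suc ` UNIV" by (rule image_eqI) simp
    qed auto
  qed
  have "(\<lambda>m. of_nat (Suc m) :: complex) ` UNIV = of_nat ` (Suc ` UNIV)"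
    by (simp add: image_image)
  then show ?thesis unfolding s by (simp add: polesA_def pos_ints_def)
qed

lemma PP_tA: "x \<notin> pos_ints \<Longrightarrow> PP (Suc k) x = (\<Sum>i\<le>k. tA {} x i * ((-1) ^ (k - i) / fact (k - i)))"
  unfolding pf by (intro sum.cong refl) (simp add: tA_def cc_def)

lemma exp_m1: "(\<lambda>n. (-1) ^ n / fact n) sums (exp (-1) :: complex)"
proof -
  have "(\<lambda>n. (-1) ^ n /\<^sub>R fact n) sums (exp (-1) :: complex)" by (rule exp_converges)
  moreover have "(-1) ^ n /\<^sub>R fact n = ((-1) ^ n / fact n :: complex)" for n
    by (simp add: scaleR_conv_of_real divide_inverse mult.commute)
  ultimately show ?thesis by simp
qed

lemma MLsums:
  assumes x: "x \<notin> pos_ints"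
  shows "(\<lambda>k. PP (Suc k) x) sums (gA {} x * exp (-1))"
proof -
  have xp: "x \<notin> polesA {}" using x polesA_empty by simp
  have s1: "summable (\<lambda>m. norm (tA {} x m))" by (rule summable_tA[OF xp])
  have s2: "summable (\<lambda>n. norm ((-1) ^ n / fact n :: complex))"
    using summable_inv_fact by (simp add: norm_divide norm_power)
  have "(\<lambda>k. \<Sum>i\<le>k. tA {} x i * ((-1) ^ (k - i) / fact (k - i))) sums
        ((\<Sum>m. tA {} x m) * (\<Sum>n. (-1) ^ n / fact n))"
    by (rule Cauchy_product_sums[OF s1 s2])
  moreover have e1: "(\<lambda>k. \<Sum>i\<le>k. tA {} x i * ((-1) ^ (k - i) / fact (k - i))) = (\<lambda>k. PP (Suc k) x)"
    by (rule ext) (rule PP_tA[OF x, symmetric])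
  moreover have e2: "(\<Sum>n. (-1) ^ n / fact n) = (exp (-1)::complex)"
    using exp_m1 by (rule sums_unique[symmetric])
  ultimately show ?thesis unfolding gA_def by simp
qed



lemma y0_PP: "y0 x = (\<Sum>k. PP (Suc k) x)"
  by (simp add: y0_def PP_def)

lemma y0_gA: "x \<notin> pos_ints \<Longrightarrow> y0 x = exp (-1) * gA {} x"
  using MLsums[of x] by (simp add: y0_PP sums_iff mult.commute)

lemma part_summable: "x \<notin> pos_ints \<Longrightarrow> summable (\<lambda>k. \<Prod>j\<in>{1..Suc k}. 1 / (x - of_nat j))"
  using MLsums[of x] unfolding PP_def by (rule sums_summable)

lemma part_holo: "y0 holomorphic_on (- pos_ints)"
proof (rule holomorphic_transform[of "\<lambda>x. exp (-1) * gA {} x"])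
  show "(\<lambda>x. exp (-1) * gA {} x) holomorphic_on - pos_ints"
    using gA_holo[of "{}"] unfolding polesA_empty by (intro holomorphic_intros)
  show "exp (-1) * gA {} x = y0 x" if "x \<in> - pos_ints" for x
    using that y0_gA by simp
qed

lemma Gamma_Suc: "Gamma (of_nat (Suc k) :: complex) = fact k"
  using Gamma_fact[of k] by (simp add: add.commute)

lemma part_ML:
  assumes x: "x \<notin> pos_ints"
  shows "(\<lambda>k. exp (-1) / ((x - of_nat (Suc k)) * Gamma (of_nat (Suc k)))) sums y0 x"
proof -
  have xp: "x \<notin> polesA {}" using x polesA_empty by simp
  have "(\<lambda>k. exp (-1) * tA {} x k) sums (exp (-1) * gA {} x)"
    unfolding gA_def by (intro sums_mult summable_sums summable_norm_cancel[OF summable_tA[OF xp]])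
  moreover have "exp (-1) * tA {} x k = exp (-1) / ((x - of_nat (Suc k)) * Gamma (of_nat (Suc k)))" for k
    by (simp add: tA_def Gamma_fact mult.commute)
  ultimately show ?thesis using y0_gA[OF x] by simp
qed

lemma polesA_mono: "polesA {p} \<subseteq> polesA {}"
  by (auto simp: polesA_def)

lemma split_gA:
  assumes x: "x \<notin> polesA {}"
  shows "gA {} x = tA {} x p + gA {p} x"
proof -
  have xp: "x \<notin> polesA {p}" using x polesA_mono by auto
  have "(\<lambda>m. tA {p} x m + (if m = p then tA {} x m else 0)) sums (gA {p} x + tA {} x p)"
    unfolding gA_def
    by (intro sums_add summable_sums summable_norm_cancel[OF summable_tA[OF xp]] sums_single)
  moreover have "tA {p} x m + (if m = p then tA {} x m else 0) = tA {} x m" for m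
    by (simp add: tA_def)
  ultimately have "tA {} x sums (gA {p} x + tA {} x p)" by simp
  then show ?thesis unfolding gA_def by (simp add: sums_iff add.commute)
qed

lemma pos_ints_Suc: "w \<in> pos_ints \<Longrightarrow> \<exists>m. w = of_nat (Suc m)"
proof -
  assume "w \<in> pos_ints"
  then obtain j where j: "j \<ge> 1" "w = of_nat j" by (auto simp: pos_ints_def)
  then have "j = Suc (j - 1)" by simp
  with j show ?thesis by metis
qed

locale at_pole =
  fixes p :: nat
begin

definition nn :: complex where "nn = of_nat (Suc p)"
definition FF :: "complex \<Rightarrow> complex" where
  "FF w = exp (-1) * (1 / fact p + (w - nn) * gA {p} w)"
definition SS :: "complex set" where "SS = ball nn 1"

lemma SS_open: "open SS" and nn_SS: "nn \<in> SS"
  by (auto simp: SS_def)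

lemma SS_poles: "SS \<subseteq> - polesA {p}"
proof
  fix y assume y: "y \<in> SS"
  show "y \<in> - polesA {p}"
  proof
    assume "y \<in> polesA {p}"
    then obtain m where m: "m \<noteq> p" "y = of_nat (Suc m)" by (auto simp: polesA_def)
    then have "norm (of_nat (Suc m) - of_nat (Suc p) :: complex) < 1"
      using y by (simp add: SS_def nn_def dist_norm norm_minus_commute)
    then have "Suc m = Suc p" by (rule nat_close_eq)
    with m show False by simp
  qed
qed

lemma SS_not_pos: "w \<in> SS \<Longrightarrow> w \<noteq> nn \<Longrightarrow> w \<notin> pos_ints"
proof
  assume w: "w \<in> SS" "w \<noteq> nn" "w \<in> pos_ints"
  then obtain m where m: "w = of_nat (Suc m)" using pos_ints_Suc by blast
  then have "norm (of_nat (Suc m) - of_nat (Suc p) :: complex) < 1"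
    using w by (simp add: SS_def nn_def dist_norm norm_minus_commute)
  then have "Suc m = Suc p" by (rule nat_close_eq)
  with m w show False by (simp add: nn_def)
qed

lemma FF_holo: "FF holomorphic_on SS"
proof -
  have "gA {p} holomorphic_on SS" using gA_holo SS_poles by (rule holomorphic_on_subset)
  then show ?thesis unfolding FF_def by (intro holomorphic_intros)
qed

lemma FF_nn: "FF nn = exp (-1) / fact p"
  by (simp add: FF_def)

lemma FF_nz: "FF nn \<noteq> 0"
  by (simp add: FF_nn)

lemma y0_FF: "w \<in> SS \<Longrightarrow> w \<noteq> nn \<Longrightarrow> y0 w = FF w / (w - nn)"
proof -
  assume w: "w \<in> SS" "w \<noteq> nn"
  have np: "w \<notin> pos_ints" using SS_not_pos[OF w] .
  then have "w \<notin> polesA {}" using polesA_empty by simp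
  then have "y0 w = exp (-1) * (tA {} w p + gA {p} w)"
    using y0_gA[OF np] split_gA by simp
  also have "tA {} w p = 1 / (fact p * (w - nn))" by (simp add: tA_def nn_def)
  also have "exp (-1) * (1 / (fact p * (w - nn)) + gA {p} w) = FF w / (w - nn)"
  proof -
    have d: "w - nn \<noteq> 0" using w(2) by simp
    have "FF w / (w - nn) = exp (-1) * ((1 / fact p) / (w - nn) + ((w - nn) * gA {p} w) / (w - nn))"
      unfolding FF_def times_divide_eq_right[symmetric] add_divide_distrib by (rule refl)
    also have "((w - nn) * gA {p} w) / (w - nn) = gA {p} w" using d by simp
    also have "(1 / fact p) / (w - nn) = 1 / (fact p * (w - nn))" by simp
    finally show ?thesis by simp
  qed
  finally show ?thesis .
qed

lemma ev_eq: "eventually (\<lambda>w. y0 w = FF w / (w - nn)) (at nn)"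
  using eventually_at_in_open[OF SS_open nn_SS] by eventually_elim (use y0_FF in auto)

lemma pole: "is_pole y0 nn"
proof -
  have "is_pole (\<lambda>w. FF w / (w - nn) ^ 1) nn"
    by (rule is_pole_basic[OF FF_holo SS_open nn_SS FF_nz]) simp
  then show ?thesis
    by (rule is_pole_transform) (use ev_eq in \<open>auto elim!: eventually_mono\<close>)
qed

lemma zord: "zorder y0 nn = -1"
  by (rule zorder_eqI[OF SS_open nn_SS FF_holo FF_nz])
     (simp add: y0_FF power_int_minus divide_inverse)

lemma resid: "residue y0 nn = exp (-1) / Gamma nn"
proof -
  have "residue y0 nn = residue (\<lambda>w. FF w / (w - nn)) nn"
    by (rule residue_cong[OF ev_eq refl])
  also have "\<dots> = FF nn" by (rule residue_simple[OF SS_open nn_SS FF_holo])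
  also have "\<dots> = exp (-1) / fact p" by (rule FF_nn)
  also have "fact p = Gamma nn" by (simp add: nn_def Gamma_fact)
  finally show ?thesis .
qed

lemma isol: "isolated_singularity_at y0 nn"
proof (rule isolated_singularity_at_holomorphic[OF _ SS_open nn_SS])
  have "(\<lambda>w. FF w / (w - nn)) holomorphic_on SS - {nn}"
    using FF_holo by (intro holomorphic_intros) (auto intro: holomorphic_on_subset)
  then show "y0 holomorphic_on SS - {nn}"
    by (rule holomorphic_transform) (simp add: y0_FF)
qed

end

lemma part_pole:
  assumes "n \<ge> 1"
  shows "is_pole y0 (of_nat n) \<and> zorder y0 (of_nat n) = -1
          \<and> residue y0 (of_nat n) = exp (-1) / Gamma (of_nat n)"
proof -
  have n: "n = Suc (n - 1)" using assms by simp
  interpret at_pole "n - 1" .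
  have nn: "nn = of_nat n" unfolding nn_def using n by simp
  show ?thesis using pole zord resid unfolding nn by simp
qed

lemma closed_pos_ints: "closed pos_ints"
  using closed_polesA[of "{}"] polesA_empty by simp

lemma part_mero: "y0 meromorphic_on UNIV"
  unfolding meromorphic_on_altdef
proof
  fix z :: complex
  show "isolated_singularity_at y0 z \<and> not_essential y0 z"
  proof (cases "z \<in> pos_ints")
    case True
    then obtain m where m: "z = of_nat (Suc m)" using pos_ints_Suc by blast
    interpret at_pole m .
    have "z = nn" using m by (simp add: nn_def)
    then show ?thesis using isol pole by auto
  next
    case False
    have o: "open (- pos_ints)" using closed_pos_ints by auto
    have "isolated_singularity_at y0 z"
      by (rule isolated_singularity_at_holomorphic[OF _ o]) (use part_holo False in \<open>auto intro: holomorphic_on_subset\<close>)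
    moreover have "not_essential y0 z"
      by (rule not_essential_holomorphic[OF part_holo]) (use False o in auto)
    ultimately show ?thesis by simp
  qed
qed

lemma PP_shift: "PP (Suc k) (x + 1) = (1 / x) * PP k x"
proof -
  have "PP (Suc k) (x + 1) = (\<Prod>j\<in>{Suc 0..Suc k}. 1 / (x + 1 - of_nat j))"
    by (simp add: PP_def)
  also have "\<dots> = (\<Prod>j\<in>{0..k}. 1 / (x + 1 - of_nat (Suc j)))"
    by (subst prod.atLeast_Suc_atMost_Suc_shift) (simp add: comp_def)
  also have "\<dots> = (\<Prod>j\<in>{0..k}. 1 / (x - of_nat j))"
    by (intro prod.cong refl) simp
  also have "\<dots> = 1 / x * (\<Prod>j\<in>{Suc 0..k}. 1 / (x - of_nat j))"
    by (subst prod.atLeast_Suc_atMost) simp_all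
  finally show ?thesis by (simp add: PP_def)
qed

lemma part_feq:
  assumes x: "x \<notin> pos_ints" "x \<noteq> 0"
  shows "y0 (x + 1) = y0 x / x + 1 / x"
proof -
  have "(\<lambda>k. PP (Suc k) x) sums y0 x"
    using MLsums[OF x(1)] y0_gA[OF x(1)] by (simp add: mult.commute)
  then have "(\<lambda>k. PP k x) sums (y0 x + 1)"
    by (subst (asm) sums_Suc_iff) (simp add: PP_def)
  then have "(\<lambda>k. 1 / x * PP k x) sums (1 / x * (y0 x + 1))"
    by (rule sums_mult)
  then have "(\<lambda>k. PP (Suc k) (x + 1)) sums (1 / x * (y0 x + 1))"
    by (simp add: PP_shift)
  then have "y0 (x + 1) = 1 / x * (y0 x + 1)"
    by (simp add: y0_PP sums_iff)
  then show ?thesis by (simp add: add_divide_distrib)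
qed



lemma sector:
  fixes x :: complex
  assumes d: "\<delta> > 0" and a: "\<bar>Arg x\<bar> \<ge> \<delta>"
  shows "sin (min \<delta> 1) * norm x \<le> norm (x - of_nat j)"
proof -
  define t where "t = Arg x"
  define s where "s = sin (min \<delta> 1)"
  have pi4: "pi > 3" by (rule pi_gt3)
  have s0: "0 \<le> s" unfolding s_def using d pi4 by (intro sin_ge_zero) auto
  have s1: "s \<le> 1" unfolding s_def by (rule sin_le_one)
  have Re: "Re x = norm x * cos t" using Re_rcis[of "norm x" "Arg x"] by (simp add: rcis_cmod_Arg t_def)
  have Im: "Im x = norm x * sin t" using Im_rcis[of "norm x" "Arg x"] by (simp add: rcis_cmod_Arg t_def)
  have tb: "- pi < t" "t \<le> pi" using Arg_bounded[of x] by (auto simp: t_def)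
  have sq: "(norm (x - of_nat j))\<^sup>2 = (Re x - real j)\<^sup>2 + (Im x)\<^sup>2"
    by (simp add: cmod_power2)
  have nx: "(norm x)\<^sup>2 = (Re x)\<^sup>2 + (Im x)\<^sup>2" by (simp add: cmod_power2)
  show ?thesis
  proof (cases "cos t \<le> 0")
    case True
    then have "Re x \<le> 0" unfolding Re by (simp add: mult_nonneg_nonpos)
    have e2: "(Re x - real j)\<^sup>2 = (Re x)\<^sup>2 + real j * (real j - 2 * Re x)"
      by (simp add: power2_eq_square algebra_simps)
    have "0 \<le> real j * (real j - 2 * Re x)" using \<open>Re x \<le> 0\<close> by (intro mult_nonneg_nonneg) auto
    then have "(Re x)\<^sup>2 \<le> (Re x - real j)\<^sup>2" unfolding e2 by simp
    then have "(norm x)\<^sup>2 \<le> (norm (x - of_nat j))\<^sup>2" using sq nx by simp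
    then have "norm x \<le> norm (x - of_nat j)" by (rule power2_le_imp_le) simp
    moreover have "s * norm x \<le> norm x" by (rule mult_left_le_one_le) (use s0 s1 in auto)
    ultimately show ?thesis unfolding s_def by simp
  next
    case False
    have lt: "\<bar>t\<bar> < pi / 2"
    proof (rule ccontr)
      assume "\<not> \<bar>t\<bar> < pi / 2"
      then have h: "pi / 2 \<le> \<bar>t\<bar>" "\<bar>t\<bar> \<le> pi" using tb by auto
      have "cos \<bar>t\<bar> \<le> 0"
      proof (cases "\<bar>t\<bar> = pi / 2")
        case True then show ?thesis by (metis cos_pi_half order_refl)
      next
        case False then show ?thesis using h pi4 by (intro less_imp_le[OF cos_lt_zero_pi]) auto
      qed
      moreover have "cos \<bar>t\<bar> = cos t" by (simp add: abs_if)
      ultimately show False using \<open>\<not> cos t \<le> 0\<close> by simp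
    qed
    have "sin (min \<delta> 1) \<le> sin \<bar>t\<bar>"
      using lt a d pi4 by (intro sin_monotone_2pi_le) (auto simp: t_def)
    also have "sin \<bar>t\<bar> = \<bar>sin t\<bar>"
    proof (cases "t \<ge> 0")
      case True
      then have "sin t \<ge> 0" using lt tb by (intro sin_ge_zero) auto
      then show ?thesis using True by simp
    next
      case False
      then have "sin (- t) \<ge> 0" using lt tb by (intro sin_ge_zero) auto
      then show ?thesis using False by simp
    qed
    finally have "s \<le> \<bar>sin t\<bar>" unfolding s_def .
    then have "s * norm x \<le> \<bar>sin t\<bar> * norm x" by (simp add: mult_right_mono)
    also have "\<dots> = \<bar>Im x\<bar>" unfolding Im by (simp add: abs_mult)
    also have "\<dots> = \<bar>Im (x - of_nat j)\<bar>" by simp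
    also have "\<dots> \<le> norm (x - of_nat j)" by (rule abs_Im_le_cmod)
    finally show ?thesis unfolding s_def .
  qed
qed

definition Wr :: "real \<Rightarrow> complex \<Rightarrow> bool" where
  "Wr s x \<longleftrightarrow> 2 \<le> s * norm x \<and> (\<forall>j::nat. s * norm x \<le> norm (x - of_nat j))"

lemma Wr_nz: "Wr s x \<Longrightarrow> x - of_nat j \<noteq> 0"
  unfolding Wr_def by (metis norm_zero not_numeral_le_zero order_trans)

lemma Wr_x: "Wr s x \<Longrightarrow> 0 < s \<Longrightarrow> s \<le> 1 \<Longrightarrow> 2 \<le> norm x"
  unfolding Wr_def by (smt (verit, best) mult_left_le_one_le norm_ge_zero)

lemma PP_Suc: "PP (Suc k) x = PP k x * (1 / (x - of_nat (Suc k)))"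
  unfolding PP_def by (simp add: prod.cl_ivl_Suc)

lemma PP_bound:
  assumes W: "Wr s x"
  shows "norm (PP k x) \<le> (1 / (s * norm x)) ^ k"
proof (induction k)
  case 0 then show ?case by (simp add: PP_def)
next
  case (Suc k)
  have sx: "s * norm x \<ge> 2" using W by (simp add: Wr_def)
  have d1: "s * norm x \<le> norm (x - of_nat (Suc k))" using W unfolding Wr_def by blast
  have "norm (1 / (x - of_nat (Suc k))) = 1 / norm (x - of_nat (Suc k))" by (simp add: norm_divide)
  also have "1 / norm (x - of_nat (Suc k)) \<le> 1 / (s * norm x)"
  proof (rule divide_left_mono[OF d1])
    have sp: "0 < s * norm x" using sx by simp
    have n1: "0 < norm (x - of_nat (Suc k))" using d1 sx by linarith
    show "0 < norm (x - of_nat (Suc k)) * (s * norm x)" by (rule mult_pos_pos[OF n1 sp])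
  qed simp
  finally have b: "norm (1 / (x - of_nat (Suc k))) \<le> 1 / (s * norm x)" .
  have "norm (PP (Suc k) x) = norm (PP k x) * norm (1 / (x - of_nat (Suc k)))"
    unfolding PP_Suc by (rule norm_mult)
  also have "\<dots> \<le> (1 / (s * norm x)) ^ k * (1 / (s * norm x))"
  proof (rule mult_mono[OF Suc b])
    have "0 \<le> 1 / (s * norm x)" using sx by simp
    then show "0 \<le> (1 / (s * norm x)) ^ k" by (rule zero_le_power)
  qed simp
  finally show ?case by (simp add: mult.commute)
qed

definition TT :: "nat \<Rightarrow> nat \<Rightarrow> complex \<Rightarrow> complex" where
  "TT k N x = (\<Sum>n<N. fps_nth (QQ k) n / x ^ n)"

lemma QQ_coeff_rec:
  "fps_nth (QQ (Suc k)) (Suc n) = fps_nth (QQ k) n + of_nat (Suc k) * fps_nth (QQ (Suc k)) n"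
proof -
  define c :: complex where "c = of_nat (Suc k)"
  have "QQ (Suc k) * (1 - fps_const c * fps_X) = QQ (Suc k) - fps_const c * (fps_X * QQ (Suc k))"
    by (simp add: algebra_simps)
  then have "fps_nth (QQ (Suc k) - fps_const c * (fps_X * QQ (Suc k))) (Suc n) = fps_nth (fps_X * QQ k) (Suc n)"
    using QQ_rec[of k] unfolding c_def by simp
  then have "fps_nth (QQ (Suc k)) (Suc n) - c * fps_nth (QQ (Suc k)) n = fps_nth (QQ k) n"
    by simp
  then show ?thesis unfolding c_def by (simp add: algebra_simps)
qed

lemma TT_rec:
  assumes x: "x \<noteq> 0"
  shows "TT (Suc k) (Suc N) x * (x - of_nat (Suc k)) =
         TT k N x - of_nat (Suc k) * fps_nth (QQ (Suc k)) N / x ^ N"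
proof (induction N)
  case 0
  have "fps_nth (QQ (Suc k)) 0 = 0" by (rule QQ_low) simp
  then show ?case by (simp add: TT_def)
next
  case (Suc N)
  define c :: complex where "c = of_nat (Suc k)"
  define a where "a = fps_nth (QQ (Suc k))"
  define b where "b = fps_nth (QQ k)"
  have rec: "a (Suc N) = b N + c * a N" unfolding a_def b_def c_def by (rule QQ_coeff_rec)
  have T1: "TT (Suc k) (Suc (Suc N)) x = TT (Suc k) (Suc N) x + a (Suc N) / x ^ Suc N"
    by (simp add: TT_def a_def)
  have T2: "TT k (Suc N) x = TT k N x + b N / x ^ N"
    by (simp add: TT_def b_def)
  have IH: "TT (Suc k) (Suc N) x * (x - c) = TT k N x - c * a N / x ^ N"
    using Suc unfolding a_def c_def .
  have e: "a (Suc N) / x ^ Suc N * (x - c) = a (Suc N) / x ^ N - c * a (Suc N) / x ^ Suc N"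
    using x by (simp add: field_simps)
  have "TT (Suc k) (Suc (Suc N)) x * (x - c) = TT k N x - c * a N / x ^ N + (a (Suc N) / x ^ N - c * a (Suc N) / x ^ Suc N)"
    unfolding T1 distrib_right IH e ..
  also have "\<dots> = TT k N x + (a (Suc N) - c * a N) / x ^ N - c * a (Suc N) / x ^ Suc N"
    by (simp add: diff_divide_distrib)
  also have "a (Suc N) - c * a N = b N" using rec by simp
  also have "TT k N x + b N / x ^ N = TT k (Suc N) x" using T2 by simp
  finally show ?case unfolding a_def c_def .
qed

lemma err_bound:
  assumes s: "0 < s" "s \<le> 1"
  shows "\<exists>C. \<forall>x. Wr s x \<longrightarrow> norm (PP k x - TT k N x) \<le> C / norm x ^ N"
proof (induction k arbitrary: N)
  case 0
  show ?case
  proof (intro exI[of _ 1] allI impI)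
    fix x assume "Wr s x"
    then have x1: "norm x \<ge> 1" using Wr_x s by fastforce
    have "TT 0 N x = (if N = 0 then 0 else 1)"
    proof (cases N)
      case (Suc M)
      have "TT 0 N x = (\<Sum>n\<in>{0}. fps_nth (1::complex fps) n / x ^ n)"
        unfolding TT_def QQ.simps using Suc by (intro sum.mono_neutral_right) auto
      then show ?thesis using Suc by simp
    qed (simp add: TT_def)
    then show "norm (PP 0 x - TT 0 N x) \<le> 1 / norm x ^ N"
      using x1 by (auto simp: PP_def)
  qed
next
  case (Suc k)
  show ?case
  proof (cases N)
    case 0
    show ?thesis
    proof (intro exI[of _ 1] allI impI)
      fix x assume W: "Wr s x"
      have sx: "2 \<le> s * norm x" using W by (simp add: Wr_def)
      then have q: "1 / (s * norm x) \<le> 1" by simp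
      have "norm (PP (Suc k) x) \<le> (1 / (s * norm x)) ^ Suc k" by (rule PP_bound[OF W])
      also have "\<dots> \<le> 1" using q sx by (intro power_le_one) auto
      finally show "norm (PP (Suc k) x - TT (Suc k) N x) \<le> 1 / norm x ^ N"
        using 0 by (simp add: TT_def)
    qed
  next
    case (Suc M)
    obtain C where C: "\<And>x. Wr s x \<Longrightarrow> norm (PP k x - TT k M x) \<le> C / norm x ^ M"
      using Suc.IH by blast
    define c :: complex where "c = of_nat (Suc k)"
    define A where "A = norm (c * fps_nth (QQ (Suc k)) M)"
    show ?thesis
    proof (intro exI[of _ "(C + A) / s"] allI impI)
      fix x assume W: "Wr s x"
      have x2: "norm x \<ge> 2" using Wr_x[OF W s] .
      then have x0: "x \<noteq> 0" by auto
      have nz: "x - c \<noteq> 0" unfolding c_def by (rule Wr_nz[OF W])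
      have dist: "s * norm x \<le> norm (x - c)" using W unfolding Wr_def c_def by blast
      have p1: "PP (Suc k) x = PP k x / (x - c)" by (simp add: PP_Suc c_def)
      have p2: "TT (Suc k) N x = TT (Suc k) (Suc M) x * (x - c) / (x - c)" using nz Suc by simp
      have "PP (Suc k) x - TT (Suc k) N x = (PP k x - TT (Suc k) (Suc M) x * (x - c)) / (x - c)"
        unfolding p1 p2 by (rule diff_divide_distrib[symmetric])
      also have "TT (Suc k) (Suc M) x * (x - c) = TT k M x - c * fps_nth (QQ (Suc k)) M / x ^ M"
        unfolding c_def by (rule TT_rec[OF x0])
      finally have eq: "PP (Suc k) x - TT (Suc k) N x = ((PP k x - TT k M x) + c * fps_nth (QQ (Suc k)) M / x ^ M) / (x - c)"
        by (simp add: algebra_simps)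
      have "norm ((PP k x - TT k M x) + c * fps_nth (QQ (Suc k)) M / x ^ M) \<le> C / norm x ^ M + A / norm x ^ M"
        using C[OF W] by (intro order_trans[OF norm_triangle_ineq add_mono]) (auto simp: A_def norm_divide norm_power)
      also have "\<dots> = (C + A) / norm x ^ M" by (simp add: add_divide_distrib)
      finally have num: "norm ((PP k x - TT k M x) + c * fps_nth (QQ (Suc k)) M / x ^ M) \<le> (C + A) / norm x ^ M" .
      have "0 \<le> C / norm x ^ M" using C[OF W] norm_ge_zero order_trans by blast
      moreover have "C = C / norm x ^ M * norm x ^ M" using x0 by simp
      ultimately have "0 \<le> C" by (metis mult_nonneg_nonneg norm_ge_zero zero_le_power)
      then have CA: "C + A \<ge> 0" by (simp add: A_def)
      have "norm (PP (Suc k) x - TT (Suc k) N x) = norm ((PP k x - TT k M x) + c * fps_nth (QQ (Suc k)) M / x ^ M) / norm (x - c)"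
        unfolding eq by (simp add: norm_divide)
      also have "\<dots> \<le> ((C + A) / norm x ^ M) / (s * norm x)"
      proof (rule frac_le)
        show "0 < s * norm x" using s(1) x2 by (intro mult_pos_pos) auto
      qed (use num dist CA in auto)
      also have "\<dots> = (C + A) / s / norm x ^ N" by (simp add: Suc divide_divide_eq_left mult_ac)
      finally show "norm (PP (Suc k) x - TT (Suc k) N x) \<le> (C + A) / s / norm x ^ N" .
    qed
  qed
qed



lemma tail_bound:
  assumes W: "Wr s x"
  shows "summable (\<lambda>k. PP (Suc (k + N)) x)"
    and "norm (\<Sum>k. PP (Suc (k + N)) x) \<le> 2 * (1 / (s * norm x)) ^ Suc N"
proof -
  define q where "q = 1 / (s * norm x)"
  have sx: "2 \<le> s * norm x" using W by (simp add: Wr_def)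
  have q0: "0 \<le> q" using sx by (simp add: q_def)
  have q2: "q \<le> 1 / 2" unfolding q_def using sx by (simp add: divide_le_eq)
  define g where "g k = q ^ Suc N * (1 / 2) ^ k" for k
  have bnd: "norm (PP (Suc (k + N)) x) \<le> g k" for k
  proof -
    have "norm (PP (Suc (k + N)) x) \<le> q ^ Suc (k + N)" unfolding q_def by (rule PP_bound[OF W])
    also have "q ^ Suc (k + N) = q ^ Suc N * q ^ k" by (simp add: power_add mult_ac)
    also have "\<dots> \<le> q ^ Suc N * (1 / 2) ^ k"
      using q0 q2 by (intro mult_left_mono power_mono) auto
    finally show ?thesis by (simp add: g_def)
  qed
  have sg: "summable g" unfolding g_def by (intro summable_mult summable_geometric) simp
  have gsum: "suminf g = q ^ Suc N * 2"
    unfolding g_def by (subst suminf_mult[OF summable_geometric]) (simp_all add: suminf_geometric)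
  have sn: "summable (\<lambda>k. norm (PP (Suc (k + N)) x))"
    by (rule summable_comparison_test'[OF sg]) (use bnd in auto)
  then show "summable (\<lambda>k. PP (Suc (k + N)) x)" by (rule summable_norm_cancel)
  have "norm (\<Sum>k. PP (Suc (k + N)) x) \<le> (\<Sum>k. norm (PP (Suc (k + N)) x))" by (rule summable_norm[OF sn])
  also have "\<dots> \<le> suminf g" by (rule suminf_le[OF bnd sn sg])
  finally show "norm (\<Sum>k. PP (Suc (k + N)) x) \<le> 2 * (1 / (s * norm x)) ^ Suc N"
    unfolding gsum q_def by (simp add: mult.commute)
qed

lemma ytilde_sum:
  "(\<Sum>n<N. fps_nth ytilde n / x ^ n) = (\<Sum>k\<in>{1..N}. TT k N x)"
proof -
  have "(\<Sum>n<N. fps_nth ytilde n / x ^ n) = (\<Sum>n<N. \<Sum>k\<in>{1..N}. fps_nth (QQ k) n / x ^ n)"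
    unfolding ytilde_eq
  proof (intro sum.cong refl)
    fix n assume "n \<in> {..<N}"
    then have "fps_nth YY n = (\<Sum>k\<in>{1..N}. fps_nth (QQ k) n)" by (intro YY_nth_ext) simp
    then show "fps_nth YY n / x ^ n = (\<Sum>k\<in>{1..N}. fps_nth (QQ k) n / x ^ n)"
      by (simp add: sum_divide_distrib)
  qed
  also have "\<dots> = (\<Sum>k\<in>{1..N}. TT k N x)"
    unfolding TT_def by (rule sum.swap)
  finally show ?thesis .
qed

lemma PP_sum_shift: "(\<Sum>k<N. PP (Suc k) x) = (\<Sum>k\<in>{1..N}. PP k x)"
  by (rule sum.reindex_bij_witness[of _ "\<lambda>k. k - 1" Suc]) auto

lemma asym_main:
  assumes d: "\<delta> > 0"
  shows "\<exists>C R. \<forall>x. norm x \<ge> R \<and> \<bar>Arg x\<bar> \<ge> \<delta> \<longrightarrow>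
          norm (y0 x - (\<Sum>n<N. fps_nth ytilde n / x ^ n)) \<le> C / norm x ^ N"
proof -
  define s where "s = sin (min \<delta> 1)"
  have pi4: "pi > 3" by (rule pi_gt3)
  have s0: "0 < s" unfolding s_def using d pi4 by (intro sin_gt_zero) auto
  have s1: "s \<le> 1" unfolding s_def by (rule sin_le_one)
  have "\<forall>k. \<exists>C. \<forall>x. Wr s x \<longrightarrow> norm (PP k x - TT k N x) \<le> C / norm x ^ N"
    using err_bound[OF s0 s1] by blast
  then obtain Cf where Cf: "\<And>k x. Wr s x \<Longrightarrow> norm (PP k x - TT k N x) \<le> Cf k / norm x ^ N"
    by metis
  define C where "C = (\<Sum>k\<in>{1..N}. Cf k) + 2 * (1 / s) ^ Suc N"
  have main: "norm (y0 x - (\<Sum>n<N. fps_nth ytilde n / x ^ n)) \<le> C / norm x ^ N"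
    if xa: "2 / s \<le> norm x \<and> \<delta> \<le> \<bar>Arg x\<bar>" for x :: complex
  proof -
    have sx: "2 \<le> s * norm x" using xa s0 by (simp add: pos_divide_le_eq mult.commute)
    have W: "Wr s x" unfolding Wr_def using sx sector[OF d] xa by (auto simp: s_def)
    have x2: "2 \<le> norm x" using Wr_x[OF W s0 s1] .
    have summ: "summable (\<lambda>k. PP (Suc k) x)" using tail_bound(1)[OF W, of 0] by simp
    have "y0 x = (\<Sum>k. PP (Suc (k + N)) x) + (\<Sum>k<N. PP (Suc k) x)"
      unfolding y0_PP by (rule suminf_split_initial_segment[OF summ])
    then have "y0 x - (\<Sum>n<N. fps_nth ytilde n / x ^ n) =
               (\<Sum>k\<in>{1..N}. PP k x - TT k N x) + (\<Sum>k. PP (Suc (k + N)) x)"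
      unfolding ytilde_sum PP_sum_shift by (simp add: sum_subtractf)
    then have "norm (y0 x - (\<Sum>n<N. fps_nth ytilde n / x ^ n)) \<le>
               norm (\<Sum>k\<in>{1..N}. PP k x - TT k N x) + norm (\<Sum>k. PP (Suc (k + N)) x)"
      by (simp add: norm_triangle_ineq)
    also have "norm (\<Sum>k\<in>{1..N}. PP k x - TT k N x) \<le> (\<Sum>k\<in>{1..N}. Cf k / norm x ^ N)"
      by (rule order_trans[OF norm_sum sum_mono]) (rule Cf[OF W])
    also have "(\<Sum>k\<in>{1..N}. Cf k / norm x ^ N) = (\<Sum>k\<in>{1..N}. Cf k) / norm x ^ N"
      by (simp add: sum_divide_distrib)
    also have "norm (\<Sum>k. PP (Suc (k + N)) x) \<le> 2 * (1 / (s * norm x)) ^ Suc N"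
      by (rule tail_bound(2)[OF W])
    also have "2 * (1 / (s * norm x)) ^ Suc N = 2 * (1 / s) ^ Suc N / norm x ^ Suc N"
      by (simp add: power_divide power_mult_distrib)
    also have "\<dots> \<le> 2 * (1 / s) ^ Suc N / norm x ^ N"
    proof (rule divide_left_mono)
      show "norm x ^ N \<le> norm x ^ Suc N" using x2 by (intro power_increasing) auto
      show "0 \<le> 2 * (1 / s) ^ Suc N" using s0 by simp
      show "0 < norm x ^ Suc N * norm x ^ N" using x2 by (intro mult_pos_pos zero_less_power) auto
    qed
    also have "(\<Sum>k\<in>{1..N}. Cf k) / norm x ^ N + 2 * (1 / s) ^ Suc N / norm x ^ N = C / norm x ^ N"
      unfolding C_def by (simp add: add_divide_distrib)
    finally show "norm (y0 x - (\<Sum>n<N. fps_nth ytilde n / x ^ n)) \<le> C / norm x ^ N" by simp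
  qed
  show ?thesis using main by blast
qed

theorem mainTheorem1:
  shows
    "(\<forall>x. x \<notin> pos_ints \<longrightarrow> summable (\<lambda>k. \<Prod>j\<in>{1..Suc k}. 1 / (x - of_nat j)))
     \<and> y0 holomorphic_on (- pos_ints)
     \<and> y0 meromorphic_on UNIV
     \<and> (\<forall>x. x \<notin> pos_ints \<and> x \<noteq> 0 \<longrightarrow> y0 (x + 1) = y0 x / x + 1 / x)
     \<and> (\<forall>n::nat. n \<ge> 1 \<longrightarrow>
          is_pole y0 (of_nat n) \<and> zorder y0 (of_nat n) = -1
          \<and> residue y0 (of_nat n) = exp (-1) / Gamma (of_nat n))
     \<and> (\<forall>x. x \<notin> pos_ints \<longrightarrow>
          (\<lambda>k. exp (-1) / ((x - of_nat (Suc k)) * Gamma (of_nat (Suc k)))) sums y0 x)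
     \<and> (\<forall>\<delta>>0. \<forall>N::nat. \<exists>C R. \<forall>x. norm x \<ge> R \<and> \<bar>Arg x\<bar> \<ge> \<delta> \<longrightarrow>
          norm (y0 x - (\<Sum>n<N. fps_nth ytilde n / x ^ n)) \<le> C / norm x ^ N)"
  using part_summable part_holo part_mero part_feq part_pole part_ML asym_main by blast

end
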